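(* Let $\Lambda\in(\mathbb{R}\setminus\{0\})^n$ and let $h$ be a real-valued function in $C^{1,1}_{\mathrm{loc}}(\mathbb{C}^n)$, and set $P=2\mathbf{i}\,\partial h/\partial\bar z$. Then the limit $$\langle h\rangle(a)=\lim_{T\to\pm\infty}\frac{1}{|T|}\int_0^T h(\Phi_{-\Lambda t}a)\,dt$$ exists for all $a\in\mathbb{C}^n$, $\langle h\rangle\in C^{1,1}_{\mathrm{loc}}(\mathbb{C}^n)$, and for every $1\le j\le n$, $$2\mathbf{i}\frac{\partial}{\partial\bar a_j}\langle h\rangle(a)=\langle\langle P\rangle\rangle_j(a).$$ That is, the effective equation $\partial_\tau a=\langle\langle P\rangle\rangle(a)$ is Hamiltonian with Hamiltonian $\langle h\rangle$.
   Context: $C^{1,1}_{\mathrm{loc}}(\mathbb{C}^n)=\{u\in C^1(\mathbb{C}^n): u_z,u_{\bar z}\text{ are locally Lipschitz}\}$. $\partial/\partial\bar z_j=\frac12(\partial_{x_j}+\mathbf{i}\partial_{y_j})$ for $z_j=x_j+\mathbf{i}y_j$. $\Phi_w=\mathrm{diag}(e^{\mathbf{i}w_1},\dots,e^{\mathbf{i}w_n})$. $\langle\langle P\rangle\rangle(a)=\lim_{T\to\pm\infty}\frac1{|T|}\int_0^T\Phi_{\Lambda t}P(\Phi_{-\Lambda t}a)\,dt$ (for $T<0$, $\int_0^T$ means $\int_T^0$). *)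

theory Defs
  imports "HOL-Analysis.Analysis"
begin

text \<open>C^n is modelled as complex ^ 'n (an arbitrary finite index type).
  Real partial derivatives along x_j and y_j are taken from the (real) Frechet derivative.\<close>

definition dx :: "(complex^'n \<Rightarrow> complex) \<Rightarrow> 'n \<Rightarrow> complex^'n \<Rightarrow> complex" where
  "dx u j a = frechet_derivative u (at a) (axis j 1)"

definition dy :: "(complex^'n \<Rightarrow> complex) \<Rightarrow> 'n \<Rightarrow> complex^'n \<Rightarrow> complex" where
  "dy u j a = frechet_derivative u (at a) (axis j \<i>)"

definition dz :: "(complex^'n \<Rightarrow> complex) \<Rightarrow> 'n \<Rightarrow> complex^'n \<Rightarrow> complex" where
  "dz u j a = (dx u j a - \<i> * dy u j a) / 2"

definition dzbar :: "(complex^'n \<Rightarrow> complex) \<Rightarrow> 'n \<Rightarrow> complex^'n \<Rightarrow> complex" where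
  "dzbar u j a = (dx u j a + \<i> * dy u j a) / 2"

definition locally_lipschitz :: "('a::metric_space \<Rightarrow> 'b::metric_space) \<Rightarrow> bool" where
  "locally_lipschitz f \<longleftrightarrow> (\<forall>K. compact K \<longrightarrow> (\<exists>L. L-lipschitz_on K f))"

definition C1 :: "(complex^'n \<Rightarrow> complex) \<Rightarrow> bool" where
  "C1 u \<longleftrightarrow> (\<exists>D :: (complex^'n) \<Rightarrow> ((complex^'n) \<Rightarrow>\<^sub>L complex).
      (\<forall>a. (u has_derivative blinfun_apply (D a)) (at a)) \<and> continuous_on UNIV D)"

definition C11loc :: "(complex^'n \<Rightarrow> complex) \<Rightarrow> bool" where
  "C11loc u \<longleftrightarrow> C1 u \<and> (\<forall>j. locally_lipschitz (dz u j) \<and> locally_lipschitz (dzbar u j))"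

definition Phi :: "real^'n \<Rightarrow> complex^'n \<Rightarrow> complex^'n" where
  "Phi w a = (\<chi> j. exp (\<i> * of_real (w $ j)) * a $ j)"

text \<open>time_avg f L: (1/|T|) int_0^T f(t) dt \<longrightarrow> L both as T \<rightarrow> +\<infinity> and T \<rightarrow> -\<infinity>
  (for T < 0 the integral int_0^T means int_T^0).\<close>
definition time_avg :: "(real \<Rightarrow> 'a::euclidean_space) \<Rightarrow> 'a \<Rightarrow> bool" where
  "time_avg f L \<longleftrightarrow>
     ((\<lambda>T. (1 / \<bar>T\<bar>) *\<^sub>R integral {0..T} f) \<longlongrightarrow> L) at_top \<and>
     ((\<lambda>T. (1 / \<bar>T\<bar>) *\<^sub>R integral {T..0} f) \<longlongrightarrow> L) at_bot"

end

theory Submission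
  imports Defs
begin
definition E :: "real \<Rightarrow> real \<Rightarrow> complex" where
  "E w t = exp (\<i> * of_real (w * t))"

lemma norm_E [simp]: "norm (E w t) = 1"
  unfolding E_def by (simp add: norm_exp_i_times)

lemma cont_E [continuous_intros]: "continuous_on S (E w)"
  unfolding E_def by (intro continuous_intros)

lemma E_add: "E w t * E v t = E (w + v) t"
  unfolding E_def by (simp add: exp_add[symmetric] algebra_simps)

lemma E_zero [simp]: "E 0 t = 1" unfolding E_def by simp
lemma E0: "E 0 = (\<lambda>_. 1)" by (rule ext) simp

lemma E_deriv:
  assumes "w \<noteq> 0"
  shows "((\<lambda>t. E w t / (\<i> * of_real w)) has_vector_derivative E w t) (at t within S)"
proof -
  have "((\<lambda>z. exp (\<i> * of_real w * z) / (\<i> * of_real w)) has_field_derivative exp (\<i> * of_real w * of_real t)) (at (of_real t))"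
    using assms by (auto intro!: derivative_eq_intros)
  from has_vector_derivative_real_field[OF this] show ?thesis
    by (simp add: E_def mult.assoc)
qed

lemma int_E_bound:
  assumes "w \<noteq> 0" "a \<le> b"
  shows "norm (integral {a..b} (E w)) \<le> 2 / \<bar>w\<bar>"
proof -
  have "(E w has_integral (E w b / (\<i> * of_real w) - E w a / (\<i> * of_real w))) {a..b}"
    using assms by (intro fundamental_theorem_of_calculus) (auto intro: E_deriv)
  then have "integral {a..b} (E w) = E w b / (\<i> * of_real w) - E w a / (\<i> * of_real w)"
    by (rule integral_unique)
  also have "norm \<dots> \<le> norm (E w b / (\<i> * of_real w)) + norm (E w a / (\<i> * of_real w))"
    by (rule norm_triangle_ineq4)
  also have "\<dots> = 2 / \<bar>w\<bar>" by (simp add: norm_divide norm_mult)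
  finally show ?thesis .
qed

definition avgp :: "(real \<Rightarrow> 'a::real_normed_vector) \<Rightarrow> real \<Rightarrow> 'a" where
  "avgp F T = (1 / \<bar>T\<bar>) *\<^sub>R integral {0..T} F"
definition avgm :: "(real \<Rightarrow> 'a::real_normed_vector) \<Rightarrow> real \<Rightarrow> 'a" where
  "avgm F T = (1 / \<bar>T\<bar>) *\<^sub>R integral {T..0} F"

lemma time_avg_iff: "time_avg F L \<longleftrightarrow> (avgp F \<longlongrightarrow> L) at_top \<and> (avgm F \<longlongrightarrow> L) at_bot"
  unfolding time_avg_def avgp_def avgm_def ..

lemma avgp_E: "(avgp (E w) \<longlongrightarrow> (if w = 0 then 1 else 0)) at_top"
proof (cases "w = 0")
  case True
  have "\<forall>\<^sub>F T in at_top. avgp (E w) T = 1"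
    using eventually_gt_at_top[of "0::real"]
    by eventually_elim (simp add: avgp_def True content_real E0)
  then show ?thesis using True by (simp add: tendsto_eventually)
next
  case False
  have "\<forall>\<^sub>F T in at_top. norm (avgp (E w) T) \<le> (2 / \<bar>w\<bar>) / T"
    using eventually_gt_at_top[of "0::real"]
  proof eventually_elim
    case (elim T)
    have "norm (avgp (E w) T) = norm (integral {0..T} (E w)) / T"
      using elim by (simp add: avgp_def)
    also have "\<dots> \<le> (2 / \<bar>w\<bar>) / T"
      using elim False by (intro divide_right_mono int_E_bound) auto
    finally show ?case .
  qed
  moreover have "((\<lambda>T. (2 / \<bar>w\<bar>) / T) \<longlongrightarrow> 0) at_top"
    by (intro tendsto_divide_0[OF tendsto_const] filterlim_at_top_imp_at_infinity filterlim_ident)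
  ultimately show ?thesis using False by (simp add: Lim_null_comparison)
qed

lemma avgm_E: "(avgm (E w) \<longlongrightarrow> (if w = 0 then 1 else 0)) at_bot"
proof (cases "w = 0")
  case True
  have "\<forall>\<^sub>F T in at_bot. avgm (E w) T = 1"
    using eventually_gt_at_bot[of "0::real"]
    by eventually_elim (simp add: avgm_def True content_real E0)
  then show ?thesis using True by (simp add: tendsto_eventually)
next
  case False
  have "\<forall>\<^sub>F T in at_bot. norm (avgm (E w) T) \<le> (2 / \<bar>w\<bar>) / (-T)"
    using eventually_gt_at_bot[of "0::real"]
  proof eventually_elim
    case (elim T)
    have "norm (avgm (E w) T) = norm (integral {T..0} (E w)) / (-T)"
      using elim by (simp add: avgm_def)
    also have "\<dots> \<le> (2 / \<bar>w\<bar>) / (-T)"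
      using elim False by (intro divide_right_mono int_E_bound) auto
    finally show ?case .
  qed
  moreover have "((\<lambda>T. (2 / \<bar>w\<bar>) / (-T)) \<longlongrightarrow> 0) at_bot"
    by (intro tendsto_divide_0[OF tendsto_const] filterlim_at_top_imp_at_infinity filterlim_uminus_at_top_at_bot)
  ultimately show ?thesis using False by (simp add: Lim_null_comparison)
qed

definition trig :: "(real \<Rightarrow> complex) \<Rightarrow> bool" where
  "trig \<phi> \<longleftrightarrow> (\<exists>W c. finite W \<and> (\<forall>t. \<phi> t = (\<Sum>w\<in>W. c w * E w t)))"

lemma integral_lincomb:
  fixes g :: "'w \<Rightarrow> real \<Rightarrow> complex" and S :: "real set"
  assumes "finite W" "\<And>w. w \<in> W \<Longrightarrow> g w integrable_on S"
  shows "integral S (\<lambda>t. \<Sum>w\<in>W. c w * g w t) = (\<Sum>w\<in>W. c w * integral S (g w))"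
proof -
  have "integral S (\<lambda>t. \<Sum>w\<in>W. c w * g w t) = (\<Sum>w\<in>W. integral S (\<lambda>t. c w * g w t))"
    using assms by (intro integral_sum) (auto intro!: integrable_on_mult_right)

  also have "\<dots> = (\<Sum>w\<in>W. c w * integral S (g w))"
    using assms by (intro sum.cong refl) (simp add: integral_linear[OF _ bounded_linear_mult_right, unfolded o_def])
  finally show ?thesis .
qed

lemma trig_avg:
  assumes "trig \<phi>"
  shows "\<exists>L. (avgp \<phi> \<longlongrightarrow> L) at_top \<and> (avgm \<phi> \<longlongrightarrow> L) at_bot"
proof -
  obtain W c where W: "finite W" and phi: "\<And>t. \<phi> t = (\<Sum>w\<in>W. c w * E w t)"
    using assms unfolding trig_def by blast
  have int: "E w integrable_on {a..b}" for w a b by (intro integrable_continuous_real cont_E)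
  have ep: "avgp \<phi> T = (\<Sum>w\<in>W. c w * avgp (E w) T)" for T
    unfolding avgp_def phi integral_lincomb[OF W int]
    by (simp add: scaleR_sum_right scaleR_conv_of_real sum_divide_distrib algebra_simps)
  have em: "avgm \<phi> T = (\<Sum>w\<in>W. c w * avgm (E w) T)" for T
    unfolding avgm_def phi integral_lincomb[OF W int]
    by (simp add: scaleR_sum_right scaleR_conv_of_real sum_divide_distrib algebra_simps)
  show ?thesis
    unfolding ep em
    by (rule exI[of _ "\<Sum>w\<in>W. c w * (if w = 0 then 1 else 0)"], intro conjI tendsto_sum tendsto_mult tendsto_const avgp_E avgm_E)
qed

lemma trig_const: "trig (\<lambda>t. k)"
  unfolding trig_def by (rule exI[of _ "{0}"], rule exI[of _ "\<lambda>_. k"]) simp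

lemma trig_E: "trig (\<lambda>t. k * E w t)"
  unfolding trig_def by (rule exI[of _ "{w}"], rule exI[of _ "\<lambda>_. k"]) simp

lemma trig_add:
  assumes "trig f" "trig g" shows "trig (\<lambda>t. f t + g t)"
proof -
  obtain W c where W: "finite W" and f: "\<And>t. f t = (\<Sum>w\<in>W. c w * E w t)"
    using assms(1) unfolding trig_def by blast
  obtain V d where V: "finite V" and g: "\<And>t. g t = (\<Sum>w\<in>V. d w * E w t)"
    using assms(2) unfolding trig_def by blast
  define e where "e w = (if w \<in> W then c w else 0) + (if w \<in> V then d w else 0)" for w
  have "f t + g t = (\<Sum>w\<in>W\<union>V. e w * E w t)" for t
  proof -
    have "(\<Sum>w\<in>W\<union>V. e w * E w t) = (\<Sum>w\<in>W\<union>V. (if w \<in> W then c w * E w t else 0))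
          + (\<Sum>w\<in>W\<union>V. (if w \<in> V then d w * E w t else 0))"
      unfolding e_def sum.distrib[symmetric] by (intro sum.cong refl) (simp add: distrib_right)
    also have "\<dots> = (\<Sum>w\<in>(W\<union>V)\<inter>W. c w * E w t) + (\<Sum>w\<in>(W\<union>V)\<inter>V. d w * E w t)"
      using W V by (simp only: sum.inter_restrict finite_UnI)
    also have "\<dots> = f t + g t"
      by (simp add: f g Int_absorb1 Int_absorb2)
    finally show ?thesis by simp
  qed
  then show ?thesis unfolding trig_def using W V by blast
qed

lemma trig_mult:
  assumes "trig f" "trig g" shows "trig (\<lambda>t. f t * g t)"
proof -
  obtain W c where W: "finite W" and f: "\<And>t. f t = (\<Sum>w\<in>W. c w * E w t)"
    using assms(1) unfolding trig_def by blast
  obtain V d where V: "finite V" and g: "\<And>t. g t = (\<Sum>w\<in>V. d w * E w t)"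
    using assms(2) unfolding trig_def by blast
  define s where "s p = fst p + snd p" for p :: "real \<times> real"
  define U where "U = s ` (W \<times> V)"
  define e where "e u = (\<Sum>p\<in>{p\<in>W \<times> V. s p = u}. c (fst p) * d (snd p))" for u
  have fin: "finite (W \<times> V)" "finite U" using W V unfolding U_def by auto
  have "f t * g t = (\<Sum>u\<in>U. e u * E u t)" for t
  proof -
    have "f t * g t = (\<Sum>p\<in>W \<times> V. c (fst p) * d (snd p) * E (s p) t)"
      unfolding f g sum_product sum.cartesian_product s_def
      by (intro sum.cong refl) (auto simp: E_add[symmetric] algebra_simps)
    also have "\<dots> = (\<Sum>u\<in>U. \<Sum>p\<in>{p\<in>W \<times> V. s p = u}. c (fst p) * d (snd p) * E (s p) t)"
      by (rule sum.group[symmetric]) (use fin in \<open>auto simp: U_def\<close>)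
    also have "\<dots> = (\<Sum>u\<in>U. e u * E u t)"
      unfolding e_def sum_distrib_right by (intro sum.cong refl) auto
    finally show ?thesis .
  qed
  then show ?thesis unfolding trig_def using fin by blast
qed

lemma trig_sum:
  assumes "finite I" "\<And>i. i \<in> I \<Longrightarrow> trig (f i)"
  shows "trig (\<lambda>t. \<Sum>i\<in>I. f i t)"
  using assms
proof (induction I rule: finite_induct)
  case empty then show ?case using trig_const[of 0] by simp
next
  case (insert x F) then show ?case by (simp add: trig_add)
qed

lemma cnj_E: "cnj (E w t) = E (- w) t"
  unfolding E_def by (simp add: exp_cnj)

lemma trig_cnj:
  assumes "trig f" shows "trig (\<lambda>t. cnj (f t))"
proof -
  obtain W c where W: "finite W" and f: "\<And>t. f t = (\<Sum>w\<in>W. c w * E w t)"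
    using assms(1) unfolding trig_def by blast
  have eq: "cnj (f t) = (\<Sum>w\<in>uminus ` W. cnj (c (- w)) * E w t)" for t
    unfolding f by (simp add: sum.reindex cnj_E)
  show ?thesis unfolding trig_def
    by (rule exI[of _ "uminus ` W"], rule exI[of _ "\<lambda>w. cnj (c (- w))"]) (use W eq in simp)
qed

lemma Phi_nth: "(Phi (- (t *\<^sub>R \<Lambda>)) a) $ j = a $ j * E (- (\<Lambda> $ j)) t"
  unfolding Phi_def E_def by (simp add: mult.commute)

lemma trig_coord: "trig (\<lambda>t. (Phi (- (t *\<^sub>R \<Lambda>)) a) $ j)"
  unfolding Phi_nth by (rule trig_E)

lemma trig_Re: "trig f \<Longrightarrow> trig (\<lambda>t. of_real (Re (f t)))"
proof -
  assume f: "trig f"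
  have "trig (\<lambda>t. (f t + cnj (f t)) * (1/2))"
    by (intro trig_mult trig_add trig_cnj f trig_const)
  moreover have "(f t + cnj (f t)) * (1/2) = of_real (Re (f t))" for t
    by (simp add: complex_add_cnj)
  ultimately show ?thesis by simp
qed

lemma trig_Im: "trig f \<Longrightarrow> trig (\<lambda>t. of_real (Im (f t)))"
proof -
  assume f: "trig f"
  have "trig (\<lambda>t. (f t + (-1) * cnj (f t)) * (1/(2*\<i>)))"
    by (intro trig_mult trig_add trig_cnj f trig_const)
  moreover have "(f t + (-1) * cnj (f t)) * (1/(2*\<i>)) = of_real (Im (f t))" for t
    by (simp add: complex_diff_cnj)
  ultimately show ?thesis by simp
qed

lemma vec_expand:
  fixes z :: "complex^'n"
  shows "z = (\<Sum>j\<in>UNIV. Re (z $ j) *\<^sub>R axis j 1 + Im (z $ j) *\<^sub>R axis j \<i>)"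
proof -
  have "(\<Sum>j\<in>UNIV. Re (z $ j) *\<^sub>R axis j 1 + Im (z $ j) *\<^sub>R axis j \<i>) $ k = z $ k" for k
  proof -
    have "(\<Sum>j\<in>UNIV. Re (z $ j) *\<^sub>R axis j 1 + Im (z $ j) *\<^sub>R axis j \<i>) $ k
        = (\<Sum>j\<in>UNIV. (if j = k then z $ k else 0))"
      unfolding sum_component
      by (intro sum.cong refl) (auto simp: axis_def complex_eq_iff)
    also have "\<dots> = z $ k" by simp
    finally show ?thesis .
  qed
  then show ?thesis by (simp add: vec_eq_iff)
qed

lemma linear_expand:
  fixes p :: "complex^'n \<Rightarrow> 'b::real_vector"
  assumes "linear p"
  shows "p z = (\<Sum>j\<in>UNIV. Re (z $ j) *\<^sub>R p (axis j 1) + Im (z $ j) *\<^sub>R p (axis j \<i>))"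
  apply (subst vec_expand)
  using assms by (simp add: linear_sum linear_add linear_scale)

lemma trig_rpf:
  assumes "real_polynomial_function p"
  shows "trig (\<lambda>t. of_real (p (Phi (- (t *\<^sub>R \<Lambda>)) a)))"
  using assms
proof (induction p)
  case (linear f)
  have eq: "of_real (f z) = (\<Sum>j\<in>UNIV. of_real (Re (z $ j)) * of_real (f (axis j 1)) + of_real (Im (z $ j)) * of_real (f (axis j \<i>)))" for z
  proof -
    have "f z = (\<Sum>j\<in>UNIV. Re (z $ j) *\<^sub>R f (axis j 1) + Im (z $ j) *\<^sub>R f (axis j \<i>))"
      by (rule linear_expand[OF bounded_linear.linear[OF linear]])
    then show ?thesis by (simp only: of_real_sum of_real_add real_scaleR_def of_real_mult)
  qed
  have "trig (\<lambda>t. \<Sum>j\<in>UNIV. of_real (Re (Phi (- (t *\<^sub>R \<Lambda>)) a $ j)) * of_real (f (axis j 1)) +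
              of_real (Im (Phi (- (t *\<^sub>R \<Lambda>)) a $ j)) * of_real (f (axis j \<i>)))"
  proof (rule trig_sum)
    show "finite (UNIV::'a set)" by simp
  next
    fix j :: 'a
    show "trig (\<lambda>t. of_real (Re (Phi (- (t *\<^sub>R \<Lambda>)) a $ j)) * of_real (f (axis j 1)) +
              of_real (Im (Phi (- (t *\<^sub>R \<Lambda>)) a $ j)) * of_real (f (axis j \<i>)))"
      by (rule trig_add; rule trig_mult; (rule trig_const | rule trig_Re trig_Im, rule trig_coord))
  qed
  then show ?case by (simp only: eq[symmetric])
next
  case (const c) then show ?case by (rule trig_const)
next
  case (add f g) then show ?case by (simp add: trig_add)
next
  case (mult f g) then show ?case by (simp add: trig_mult)
qed

lemma trig_poly:
  fixes g :: "complex^'n \<Rightarrow> complex"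
  assumes "polynomial_function g"
  shows "trig (\<lambda>t. g (Phi (- (t *\<^sub>R \<Lambda>)) a))"
proof -
  have r: "real_polynomial_function (Re \<circ> g)" "real_polynomial_function (Im \<circ> g)"
    using assms unfolding polynomial_function_def by (auto intro: bounded_linear_Re bounded_linear_Im)
  have tr: "trig (\<lambda>t. of_real ((Re \<circ> g) (Phi (- (t *\<^sub>R \<Lambda>)) a)) + \<i> * of_real ((Im \<circ> g) (Phi (- (t *\<^sub>R \<Lambda>)) a)))"
    by (intro trig_add trig_mult trig_const trig_rpf r)
  have eq: "(\<lambda>t. of_real ((Re \<circ> g) (Phi (- (t *\<^sub>R \<Lambda>)) a)) + \<i> * of_real ((Im \<circ> g) (Phi (- (t *\<^sub>R \<Lambda>)) a)))
     = (\<lambda>t. g (Phi (- (t *\<^sub>R \<Lambda>)) a))"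
    by (rule ext) (simp add: complex_eq_iff)
  show ?thesis using tr unfolding eq .
qed

lemma norm_Phi [simp]: "norm (Phi w a) = norm a"
  unfolding norm_vec_def Phi_def by (simp add: norm_mult norm_exp_i_times)

lemma Phi_diff: "Phi w a - Phi w b = Phi w (a - b)"
  by (simp add: Phi_def vec_eq_iff algebra_simps)

lemma Phi_add: "Phi w (a + b) = Phi w a + Phi w b"
  by (simp add: Phi_def vec_eq_iff algebra_simps)

lemma flow_eq: "Phi (- (t *\<^sub>R \<Lambda>)) a = (\<chi> j. a $ j * E (- (\<Lambda> $ j)) t)"
  by (simp add: vec_eq_iff Phi_nth)

lemma cont_flow [continuous_intros]: "continuous_on S (\<lambda>t. Phi (- (t *\<^sub>R \<Lambda>)) a)"
  unfolding flow_eq by (intro continuous_intros cont_E)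

lemma trig_E1: "trig (E w)"
  using trig_E[of 1 w] by simp

lemma MO_cauchy:
  fixes F :: "nat \<Rightarrow> 'x \<Rightarrow> 'b::real_normed_vector"
  assumes lim: "\<And>k. (F k \<longlongrightarrow> L k) G" and nt: "G \<noteq> bot"
      and close: "\<And>k. \<forall>\<^sub>F x in G. dist (F k x) (H x) \<le> inverse (real (Suc k))"
  shows "Cauchy L"
proof (rule metric_CauchyI)
  fix e :: real assume e: "e > 0"
  obtain N where N: "inverse (real (Suc N)) < e/2"
    using reals_Archimedean[of "e/2"] e by auto
  show "\<exists>M. \<forall>m\<ge>M. \<forall>n\<ge>M. dist (L m) (L n) < e"
  proof (intro exI allI impI)
    fix m n assume mn: "N \<le> m" "N \<le> n"
    have "dist (L m) (L n) \<le> inverse (real (Suc m)) + inverse (real (Suc n))"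
    proof (rule tendsto_le[OF nt tendsto_const tendsto_dist[OF lim lim]])
      show "\<forall>\<^sub>F x in G. dist (F m x) (F n x) \<le> inverse (real (Suc m)) + inverse (real (Suc n))"
        using close[of m] close[of n]
      proof eventually_elim
        case (elim x)
        then show ?case using dist_triangle2[of "F m x" "F n x" "H x"] by linarith
      qed
    qed
    also have "\<dots> \<le> inverse (real (Suc N)) + inverse (real (Suc N))"
      using mn by (intro add_mono) (auto simp: field_simps)
    also have "\<dots> < e" using N by linarith
    finally show "dist (L m) (L n) < e" .
  qed
qed

lemma MO_lim:
  fixes F :: "nat \<Rightarrow> 'x \<Rightarrow> 'b::real_normed_vector"
  assumes Ll: "L \<longlonglongrightarrow> l" and lim: "\<And>k. (F k \<longlongrightarrow> L k) G"
      and close: "\<And>k. \<forall>\<^sub>F x in G. dist (F k x) (H x) \<le> inverse (real (Suc k))"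
  shows "(H \<longlongrightarrow> l) G"
proof (rule tendstoI)
  fix e :: real assume e: "e > 0"
  have "\<forall>\<^sub>F k in sequentially. dist (L k) l < e/3 \<and> dist (inverse (real (Suc k))) 0 < e/3"
    using tendstoD[OF Ll, of "e/3"] tendstoD[OF LIMSEQ_inverse_real_of_nat, of "e/3"] e
    by (auto intro: eventually_conj)
  then obtain k where k: "dist (L k) l < e/3" "inverse (real (Suc k)) < e/3"
    by (auto simp: eventually_sequentially)
  have lk: "\<forall>\<^sub>F x in G. dist (F k x) (L k) < e/3"
    using tendstoD[OF lim[of k], of "e/3"] e by simp
  show "\<forall>\<^sub>F x in G. dist (H x) l < e"
    using lk close[of k]
  proof eventually_elim
    case (elim x)
    have "dist (H x) l \<le> dist (H x) (L k) + dist (L k) l" by (rule dist_triangle)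
    moreover have "dist (H x) (L k) \<le> dist (H x) (F k x) + dist (F k x) (L k)" by (rule dist_triangle)
    moreover have "dist (H x) (F k x) = dist (F k x) (H x)" by (rule dist_commute)
    ultimately have "dist (H x) l \<le> dist (F k x) (H x) + dist (F k x) (L k) + dist (L k) l" by linarith
    then show ?case using elim k by linarith
  qed
qed

lemma avg_close:
  fixes \<phi> \<psi> :: "real \<Rightarrow> 'b::banach"
  assumes "continuous_on UNIV \<phi>" "continuous_on UNIV \<psi>" "\<And>t. norm (\<phi> t - \<psi> t) \<le> e"
  shows "T > 0 \<Longrightarrow> norm (avgp \<phi> T - avgp \<psi> T) \<le> e"
    and "T < 0 \<Longrightarrow> norm (avgm \<phi> T - avgm \<psi> T) \<le> e"
proof -
  have e: "0 \<le> e" using assms(3)[of 0] norm_ge_zero order_trans by blast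
  have int: "\<phi> integrable_on {a..b}" "\<psi> integrable_on {a..b}" for a b
    using assms by (auto intro!: integrable_continuous_real intro: continuous_on_subset)
  have bnd: "norm (integral {a..b} (\<lambda>t. \<phi> t - \<psi> t)) \<le> e * (b - a)" if "a \<le> b" for a b
  proof -
    have "((\<lambda>t. \<phi> t - \<psi> t) has_integral integral {a..b} (\<lambda>t. \<phi> t - \<psi> t)) (cbox a b)"
      using int by (auto intro!: integrable_diff)
    from has_integral_bound[OF e this] assms(3) that show ?thesis
      by (simp add: content_real)
  qed
  show "norm (avgp \<phi> T - avgp \<psi> T) \<le> e" if "T > 0"
  proof -
    have "avgp \<phi> T - avgp \<psi> T = (1 / T) *\<^sub>R integral {0..T} (\<lambda>t. \<phi> t - \<psi> t)"
      using that int by (simp add: avgp_def integral_diff scaleR_diff_right)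
    then have "norm (avgp \<phi> T - avgp \<psi> T) = norm (integral {0..T} (\<lambda>t. \<phi> t - \<psi> t)) / T"
      using that by simp
    also have "\<dots> \<le> (e * (T - 0)) / T" using bnd[of 0 T] that by (intro divide_right_mono) auto
    also have "\<dots> = e" using that by simp
    finally show ?thesis .
  qed
  show "norm (avgm \<phi> T - avgm \<psi> T) \<le> e" if "T < 0"
  proof -
    have "avgm \<phi> T - avgm \<psi> T = (1 / (-T)) *\<^sub>R integral {T..0} (\<lambda>t. \<phi> t - \<psi> t)"
      using that int by (simp add: avgm_def integral_diff scaleR_diff_right)
    then have "norm (avgm \<phi> T - avgm \<psi> T) = norm (integral {T..0} (\<lambda>t. \<phi> t - \<psi> t)) / (-T)"
      using that by simp
    also have "\<dots> \<le> (e * (0 - T)) / (-T)" using bnd[of T 0] that by (intro divide_right_mono) auto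
    also have "\<dots> = e" using that by simp
    finally show ?thesis .
  qed
qed

lemma avg_cont:
  fixes f :: "complex^'n \<Rightarrow> complex"
  assumes cf: "continuous_on UNIV f"
  shows "\<exists>L. time_avg (\<lambda>t. E w t * f (Phi (- (t *\<^sub>R \<Lambda>)) a)) L"
proof -
  define S where "S = cball (0::complex^'n) (norm a)"
  have cS: "compact S" unfolding S_def by simp
  have inS: "Phi (- (t *\<^sub>R \<Lambda>)) a \<in> S" for t unfolding S_def by simp
  have "\<forall>k. \<exists>g. polynomial_function g \<and> (\<forall>x\<in>S. norm (f x - g x) < inverse (real (Suc k)))"
    using Stone_Weierstrass_polynomial_function[OF cS continuous_on_subset[OF cf subset_UNIV]] by simp
  then obtain g where g: "\<And>k. polynomial_function (g k)"
    "\<And>k x. x \<in> S \<Longrightarrow> norm (f x - g k x) < inverse (real (Suc k))" by metis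
  define \<phi> where "\<phi> t = E w t * f (Phi (- (t *\<^sub>R \<Lambda>)) a)" for t
  define \<psi> where "\<psi> k t = E w t * g k (Phi (- (t *\<^sub>R \<Lambda>)) a)" for k t
  have tr: "trig (\<psi> k)" for k
    unfolding \<psi>_def by (intro trig_mult trig_E1 trig_poly g)
  obtain L where L: "\<And>k. (avgp (\<psi> k) \<longlongrightarrow> L k) at_top" "\<And>k. (avgm (\<psi> k) \<longlongrightarrow> L k) at_bot"
    using trig_avg[OF tr] by metis
  have c\<phi>: "continuous_on UNIV \<phi>" unfolding \<phi>_def
    by (intro continuous_intros cont_E continuous_on_compose2[OF cf cont_flow]) auto
  have c\<psi>: "continuous_on UNIV (\<psi> k)" for k unfolding \<psi>_def
    by (intro continuous_intros cont_E continuous_on_compose2[OF continuous_on_polymonial_function[OF g(1)] cont_flow]) auto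
  have cl: "norm (\<psi> k t - \<phi> t) \<le> inverse (real (Suc k))" for k t
  proof -
    have "norm (\<psi> k t - \<phi> t) = norm (E w t * (g k (Phi (- (t *\<^sub>R \<Lambda>)) a) - f (Phi (- (t *\<^sub>R \<Lambda>)) a)))"
      unfolding \<phi>_def \<psi>_def by (simp add: algebra_simps)
    also have "\<dots> = norm (f (Phi (- (t *\<^sub>R \<Lambda>)) a) - g k (Phi (- (t *\<^sub>R \<Lambda>)) a))"
      by (simp add: norm_mult norm_minus_commute)
    also have "\<dots> \<le> inverse (real (Suc k))" using g(2)[OF inS] less_imp_le by blast
    finally show ?thesis .
  qed
  have clp: "\<forall>\<^sub>F T in at_top. dist (avgp (\<psi> k) T) (avgp \<phi> T) \<le> inverse (real (Suc k))" for k
    using eventually_gt_at_top[of "0::real"]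
    by eventually_elim (unfold dist_norm, rule avg_close(1)[OF c\<psi> c\<phi> cl])
  have clm: "\<forall>\<^sub>F T in at_bot. dist (avgm (\<psi> k) T) (avgm \<phi> T) \<le> inverse (real (Suc k))" for k
    using eventually_gt_at_bot[of "0::real"]
    by eventually_elim (unfold dist_norm, rule avg_close(2)[OF c\<psi> c\<phi> cl])
  have "Cauchy L"
    by (rule MO_cauchy[OF L(1) _ clp]) simp
  then obtain l where "L \<longlonglongrightarrow> l" by (auto simp: Cauchy_convergent_iff convergent_def)
  then have "time_avg \<phi> l"
    unfolding time_avg_iff using MO_lim[OF _ L(1) clp] MO_lim[OF _ L(2) clm] by blast
  then show ?thesis unfolding \<phi>_def by blast
qed

lemma avgp_linear:
  assumes "bounded_linear B" "\<And>a b. F integrable_on {a..b}"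
  shows "avgp (\<lambda>t. B (F t)) T = B (avgp F T)"
  unfolding avgp_def
  using integral_linear[OF assms(2) assms(1)] linear_scale[OF bounded_linear.linear[OF assms(1)]]
  by (simp add: o_def)

lemma avgm_linear:
  assumes "bounded_linear B" "\<And>a b. F integrable_on {a..b}"
  shows "avgm (\<lambda>t. B (F t)) T = B (avgm F T)"
  unfolding avgm_def
  using integral_linear[OF assms(2) assms(1)] linear_scale[OF bounded_linear.linear[OF assms(1)]]
  by (simp add: o_def)

lemma avgp_diff:
  assumes "\<And>a b. F integrable_on {a..b}" "\<And>a b. H integrable_on {a..b}"
  shows "avgp (\<lambda>t. F t - H t) T = avgp F T - avgp H T"
  unfolding avgp_def using assms by (simp add: integral_diff scaleR_diff_right)

lemma avgp_sum:
  assumes "finite I" "\<And>i a b. i \<in> I \<Longrightarrow> F i integrable_on {a..b}"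
  shows "avgp (\<lambda>t. \<Sum>i\<in>I. F i t) T = (\<Sum>i\<in>I. avgp (F i) T)"
  unfolding avgp_def using assms by (simp add: integral_sum scaleR_sum_right)

lemma avgp_zero [simp]: "avgp (\<lambda>t. 0) T = 0"
  unfolding avgp_def by simp

definition G :: "('n \<Rightarrow> complex) \<Rightarrow> complex^'n \<Rightarrow> complex" where
  "G m v = of_real (\<Sum>j\<in>UNIV. 2 * Re (cnj (v $ j) * m j))"

lemma G_norm: "norm (G m v) \<le> (\<Sum>j\<in>UNIV. 2 * norm (m j)) * norm v"
proof -
  have "norm (G m v) = \<bar>\<Sum>j\<in>UNIV. 2 * Re (cnj (v $ j) * m j)\<bar>"
    unfolding G_def by (simp only: norm_of_real)
  also have "\<dots> \<le> (\<Sum>j\<in>UNIV. \<bar>2 * Re (cnj (v $ j) * m j)\<bar>)" by (rule sum_abs)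
  also have "\<dots> \<le> (\<Sum>j\<in>UNIV. 2 * norm (m j) * norm v)"
  proof (rule sum_mono)
    fix j
    have "\<bar>Re (cnj (v $ j) * m j)\<bar> \<le> norm (cnj (v $ j) * m j)" by (rule abs_Re_le_cmod)
    also have "\<dots> = norm (v $ j) * norm (m j)" by (simp add: norm_mult)
    also have "\<dots> \<le> norm v * norm (m j)" by (intro mult_right_mono Finite_Cartesian_Product.norm_nth_le) auto
    finally have x: "\<bar>Re (cnj (v $ j) * m j)\<bar> \<le> norm v * norm (m j)" .
    have aux: "\<bar>2 * x\<bar> \<le> 2 * b * a" if "\<bar>x\<bar> \<le> a * b" for x a b :: real
      using that by (simp add: abs_mult mult.commute)
    show "\<bar>2 * Re (cnj (v $ j) * m j)\<bar> \<le> 2 * norm (m j) * norm v" by (rule aux[OF x])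
  qed
  also have "\<dots> = (\<Sum>j\<in>UNIV. 2 * norm (m j)) * norm v" by (simp add: sum_distrib_right)
  finally show ?thesis .
qed

lemma G_bl: "bounded_linear (G m)"
proof (rule bounded_linear_intro[where K = "\<Sum>j\<in>UNIV. 2 * norm (m j)"])
  show "G m (x + y) = G m x + G m y" for x y
    unfolding G_def by (simp add: sum.distrib[symmetric] algebra_simps)
  show "G m (r *\<^sub>R x) = r *\<^sub>R G m x" for r x
  proof -
    have re: "Re (cnj (r *\<^sub>R z) * w) = r * Re (cnj z * w)" for z w :: complex
      by (simp add: scaleR_conv_of_real algebra_simps)
    have "G m (r *\<^sub>R x) = of_real (\<Sum>j\<in>UNIV. r * (2 * Re (cnj (x $ j) * m j)))"
      unfolding G_def vector_scaleR_component re by (simp add: algebra_simps)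
    also have "\<dots> = r *\<^sub>R G m x"
      unfolding G_def sum_distrib_left[symmetric] by (simp add: scaleR_conv_of_real)
    finally show ?thesis .
  qed
  show "norm (G m x) \<le> norm x * (\<Sum>j\<in>UNIV. 2 * norm (m j))" for x
    using G_norm[of m x] by (simp add: mult.commute)
qed

lemma G_diff: "G m v - G m' v = G (\<lambda>j. m j - m' j) v"
  unfolding G_def by (simp add: sum_subtractf[symmetric] algebra_simps)

lemma G_axis1: "G m (axis j 1) = of_real (2 * Re (m j))"
proof -
  have "G m (axis j 1) = of_real (\<Sum>k\<in>UNIV. if k = j then 2 * Re (m j) else 0)"
    unfolding G_def by (intro arg_cong[where f = of_real] sum.cong) (auto simp: axis_def)
  then show ?thesis by simp
qed

lemma G_axisi: "G m (axis j \<i>) = of_real (2 * Im (m j))"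
proof -
  have "G m (axis j \<i>) = of_real (\<Sum>k\<in>UNIV. if k = j then 2 * Im (m j) else 0)"
    unfolding G_def by (intro arg_cong[where f = of_real] sum.cong) (auto simp: axis_def)
  then show ?thesis by simp
qed

lemma G_flow: "G m (Phi (- (t *\<^sub>R \<Lambda>)) v) = G (\<lambda>j. E (\<Lambda> $ j) t * m j) v"
  unfolding G_def Phi_nth by (simp add: cnj_E mult.assoc)

lemma G_sum: "G m v = (\<Sum>j\<in>UNIV. of_real (2 * Re (cnj (v $ j) * m j)))"
  unfolding G_def by simp

lemma loclip_cball:
  fixes f :: "'a::euclidean_space \<Rightarrow> 'b::metric_space"
  assumes "locally_lipschitz f" shows "\<exists>L. L-lipschitz_on (cball 0 r) f"
proof -
  have "\<forall>K. compact K \<longrightarrow> (\<exists>L. L-lipschitz_on K f)" using assms unfolding locally_lipschitz_def .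
  then have "compact (cball (0::'a) r) \<longrightarrow> (\<exists>L. L-lipschitz_on (cball 0 r) f)" by (rule spec)
  then show ?thesis by simp
qed

lemma loclip_of_cball:
  fixes f :: "'a::real_normed_vector \<Rightarrow> 'b::metric_space"
  assumes "\<And>r. \<exists>L. L-lipschitz_on (cball 0 r) f" shows "locally_lipschitz f"
  unfolding locally_lipschitz_def
proof (intro allI impI)
  fix K :: "'a set" assume "compact K"
  then have "bounded K" by (rule compact_imp_bounded)
  then obtain r where "\<forall>x\<in>K. norm x \<le> r" unfolding bounded_iff by blast
  then have "K \<subseteq> cball 0 r" by auto
  moreover obtain L where "L-lipschitz_on (cball 0 r) f" using assms by blast
  ultimately show "\<exists>L. L-lipschitz_on K f" using lipschitz_on_subset by blast
qed

lemma cont_of_cball: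
  fixes f :: "'a::real_normed_vector \<Rightarrow> 'b::metric_space"
  assumes "\<And>r. \<exists>L. L-lipschitz_on (cball 0 r) f" shows "continuous_on UNIV f"
proof -
  have "continuous (at x) f" for x
  proof -
    obtain L where "L-lipschitz_on (cball 0 (norm x + 1)) f" using assms by blast
    then have "continuous_on (cball 0 (norm x + 1)) f" by (rule lipschitz_on_continuous_on)
    moreover have "ball 0 (norm x + 1) \<subseteq> interior (cball 0 (norm x + 1))"
      by (rule interior_maximal) auto
    then have "x \<in> interior (cball 0 (norm x + 1))" by auto
    ultimately show ?thesis by (rule continuous_on_interior)
  qed
  then show ?thesis by (simp add: continuous_on_eq_continuous_at)
qed

lemma Phi_pos_nth: "(Phi (t *\<^sub>R \<Lambda>) x) $ j = E (\<Lambda> $ j) t * x $ j"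
  unfolding Phi_def E_def by (simp add: mult.commute)

lemma aux_term:
  assumes "Im A = 0" "Im B = 0"
  shows "Re v *\<^sub>R A + Im v *\<^sub>R B = of_real (2 * Re (cnj v * ((A + \<i> * B) / 2)))"
  using assms by (simp add: complex_eq_iff)

lemma bl_aux: "bounded_linear (\<lambda>z::complex. complex_of_real (2 * Re (c * z)))"
proof (rule bounded_linear_intro[where K = "2 * norm c"])
  show "complex_of_real (2 * Re (c * (x + y))) = complex_of_real (2 * Re (c * x)) + complex_of_real (2 * Re (c * y))" for x y
    by (simp add: algebra_simps)
  show "complex_of_real (2 * Re (c * (r *\<^sub>R x))) = r *\<^sub>R complex_of_real (2 * Re (c * x))" for r x
    by (simp add: scaleR_conv_of_real algebra_simps)
  show "norm (complex_of_real (2 * Re (c * x))) \<le> norm x * (2 * norm c)" for x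
  proof -
    have r: "\<bar>Re (c * x)\<bar> \<le> norm c * norm x" using abs_Re_le_cmod[of "c*x"] unfolding norm_mult .
    have "norm (complex_of_real (2 * Re (c * x))) = 2 * \<bar>Re (c * x)\<bar>"
      by (simp only: norm_of_real abs_mult abs_numeral)
    also have "\<dots> \<le> 2 * (norm c * norm x)" using r by linarith
    also have "\<dots> = norm x * (2 * norm c)" by simp
    finally show ?thesis .
  qed
qed

theorem theorem5p1:
  fixes \<Lambda> :: "real^'n" and h :: "complex^'n \<Rightarrow> real"
    and P :: "complex^'n \<Rightarrow> complex^'n"
  assumes "\<forall>j. \<Lambda> $ j \<noteq> 0"
    and "C11loc (\<lambda>z. complex_of_real (h z))"
    and "\<forall>a. P a = (\<chi> j. 2 * \<i> * dzbar (\<lambda>z. complex_of_real (h z)) j a)"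
  shows "\<exists>hav :: complex^'n \<Rightarrow> real.
           (\<forall>a. time_avg (\<lambda>t. h (Phi (- (t *\<^sub>R \<Lambda>)) a)) (hav a)) \<and>
           C11loc (\<lambda>z. complex_of_real (hav z)) \<and>
           (\<forall>a. time_avg (\<lambda>t. Phi (t *\<^sub>R \<Lambda>) (P (Phi (- (t *\<^sub>R \<Lambda>)) a)))
                   (\<chi> j. 2 * \<i> * dzbar (\<lambda>z. complex_of_real (hav z)) j a))"
proof -
  define u where "u = (\<lambda>z. complex_of_real (h z))"
  define R where "R t a = Phi (- (t *\<^sub>R \<Lambda>)) a" for t a
  from assms(2) obtain D where D: "\<And>a. (u has_derivative blinfun_apply (D a)) (at a)"
    and lipzb: "\<And>j. locally_lipschitz (dzbar u j)"
    unfolding C11loc_def C1_def u_def by blast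
  have fd: "frechet_derivative u (at z) = blinfun_apply (D z)" for z
    using frechet_derivative_at[OF D] by simp
  have ImD: "Im (D z v) = 0" for z v
  proof -
    have "((\<lambda>x. Im (u x)) has_derivative (\<lambda>v. Im (D z v))) (at z)"
      using bounded_linear.has_derivative[OF bounded_linear_Im D] .
    moreover have "(\<lambda>x. Im (u x)) = (\<lambda>x. 0)" by (simp add: u_def)
    ultimately have "((\<lambda>x. 0) has_derivative (\<lambda>v. Im (D z v))) (at z)" by simp
    from has_derivative_unique[OF this has_derivative_const] show ?thesis by meson
  qed
  have DG: "blinfun_apply (D z) v = G (\<lambda>j. dzbar u j z) v" for z v
  proof -
    have "blinfun_apply (D z) v = (\<Sum>j\<in>UNIV. Re (v $ j) *\<^sub>R D z (axis j 1) + Im (v $ j) *\<^sub>R D z (axis j \<i>))"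
      by (rule linear_expand[OF bounded_linear.linear[OF blinfun.bounded_linear_right]])
    also have "\<dots> = G (\<lambda>j. dzbar u j z) v"
      unfolding G_sum
      by (intro sum.cong refl, unfold dzbar_def dx_def dy_def fd, rule aux_term) (simp_all add: ImD)
    finally show ?thesis .
  qed
  have cu: "continuous_on UNIV u"
    using D has_derivative_continuous continuous_at_imp_continuous_on by blast
  have ch: "continuous_on UNIV h"
  proof -
    have "continuous_on UNIV (\<lambda>z. Re (u z))" by (intro continuous_intros cu)
    then show ?thesis by (simp add: u_def)
  qed
  have cdz: "continuous_on UNIV (dzbar u j)" for j
    by (rule cont_of_cball) (rule loclip_cball[OF lipzb])
  have cR: "continuous_on S (\<lambda>t. R t a)" for S a unfolding R_def by (rule cont_flow)
  have normR [simp]: "norm (R t a) = norm a" for t a unfolding R_def by simp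
  have Radd: "R t (a + b) = R t a + R t b" for t a b unfolding R_def by (rule Phi_add)
  have Rdiff: "R t a - R t b = R t (a - b)" for t a b unfolding R_def by (rule Phi_diff)
  define \<psi> where "\<psi> j a t = E (\<Lambda> $ j) t * dzbar u j (R t a)" for j a t
  have c\<psi>: "continuous_on S (\<psi> j a)" for S j a
    unfolding \<psi>_def by (intro continuous_intros cont_E continuous_on_compose2[OF cdz cR]) auto
  have int\<psi>: "\<psi> j a integrable_on {c..d}" for j a c d
    by (rule integrable_continuous_real[OF c\<psi>])
  have "\<forall>j a. \<exists>L. time_avg (\<psi> j a) L"
    unfolding \<psi>_def R_def by (intro allI avg_cont cdz)
  then obtain M where M: "\<And>j a. time_avg (\<psi> j a) (M j a)" by metis
  have "\<forall>a. \<exists>L. time_avg (\<lambda>t. E 0 t * u (R t a)) L"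
    unfolding R_def by (intro allI avg_cont cu)
  then obtain Lu where Lu0: "\<And>a. time_avg (\<lambda>t. E 0 t * u (R t a)) (Lu a)" by metis
  have Lu: "time_avg (\<lambda>t. u (R t a)) (Lu a)" for a using Lu0[of a] by simp
  have cuR: "continuous_on S (\<lambda>t. u (R t a))" for S a
    by (rule continuous_on_compose2[OF cu cR]) auto
  have chR: "continuous_on S (\<lambda>t. h (R t a))" for S a
    by (rule continuous_on_compose2[OF ch cR]) auto
  have intu: "(\<lambda>t. u (R t a)) integrable_on {c..d}" for a c d
    by (rule integrable_continuous_real[OF cuR])
  have inth: "(\<lambda>t. h (R t a)) integrable_on {c..d}" for a c d
    by (rule integrable_continuous_real[OF chR])
  have eqp: "avgp (\<lambda>t. u (R t a)) T = of_real (avgp (\<lambda>t. h (R t a)) T)" for a T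
    unfolding u_def by (rule avgp_linear[OF bounded_linear_of_real inth])
  have eqm: "avgm (\<lambda>t. u (R t a)) T = of_real (avgm (\<lambda>t. h (R t a)) T)" for a T
    unfolding u_def by (rule avgm_linear[OF bounded_linear_of_real inth])
  have hav: "time_avg (\<lambda>t. h (R t a)) (Re (Lu a))" for a
  proof -
    have "((\<lambda>T. Re (avgp (\<lambda>t. u (R t a)) T)) \<longlongrightarrow> Re (Lu a)) at_top"
      using Lu[of a] unfolding time_avg_iff by (intro tendsto_Re) auto
    moreover have "((\<lambda>T. Re (avgm (\<lambda>t. u (R t a)) T)) \<longlongrightarrow> Re (Lu a)) at_bot"
      using Lu[of a] unfolding time_avg_iff by (intro tendsto_Re) auto
    ultimately show ?thesis unfolding time_avg_iff eqp eqm by simp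
  qed
  have Lureal: "Lu a = of_real (Re (Lu a))" for a
  proof -
    have "((\<lambda>T. Im (avgp (\<lambda>t. u (R t a)) T)) \<longlongrightarrow> Im (Lu a)) at_top"
      using Lu[of a] unfolding time_avg_iff by (intro tendsto_Im) auto
    moreover have "(\<lambda>T. Im (avgp (\<lambda>t. u (R t a)) T)) = (\<lambda>T. 0)" unfolding eqp by simp
    ultimately have "((\<lambda>T. 0) \<longlongrightarrow> Im (Lu a)) (at_top :: real filter)" by simp
    moreover have nb: "(at_top::real filter) \<noteq> bot" by simp
    ultimately have "Im (Lu a) = 0" using tendsto_unique[OF nb _ tendsto_const] by blast
    then show ?thesis by (simp add: complex_eq_iff)
  qed
  have Lufun: "(\<lambda>z. complex_of_real (Re (Lu z))) = Lu" using Lureal by (intro ext) simp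
  have "\<forall>j. \<exists>L. L-lipschitz_on (cball 0 r) (dzbar u j)" for r
    using loclip_cball[OF lipzb] by blast
  then obtain Lz where Lz: "\<And>j. (Lz r j)-lipschitz_on (cball 0 r) (dzbar u j)" for r
    by metis
  have Lz0: "0 \<le> Lz r j" for r j using lipschitz_on_nonneg[OF Lz] .
  define C where "C r = (\<Sum>j\<in>UNIV. 2 * Lz r j)" for r
  have C0: "0 \<le> C r" for r unfolding C_def using Lz0 by (simp add: sum_nonneg)
  have Dlip: "norm (D x v - D y v) \<le> C r * norm (x - y) * norm v"
    if "x \<in> cball 0 r" "y \<in> cball 0 r" for x y v r
  proof -
    have "norm (D x v - D y v) = norm (G (\<lambda>j. dzbar u j x - dzbar u j y) v)"
      unfolding DG G_diff ..
    also have "\<dots> \<le> (\<Sum>j\<in>UNIV. 2 * norm (dzbar u j x - dzbar u j y)) * norm v" by (rule G_norm)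
    also have "\<dots> \<le> (\<Sum>j\<in>UNIV. 2 * (Lz r j * norm (x - y))) * norm v"
      by (intro mult_right_mono sum_mono mult_left_mono lipschitz_on_normD[OF Lz] that) auto
    also have "\<dots> = C r * norm (x - y) * norm v"
      unfolding C_def sum_distrib_right by (simp add: mult.assoc)
    finally show ?thesis .
  qed
  have tay: "norm (u (y + w) - u y - D y w) \<le> norm w * (C r * norm w)"
    if "y \<in> cball 0 r" "y + w \<in> cball 0 r" for y w r
  proof -
    define S where "S = closed_segment y (y + w)"
    have Ssub: "S \<subseteq> cball 0 r" unfolding S_def using that by (intro closed_segment_subset) auto
    have "norm (u (y + w) - u y - blinfun_apply (D y) (y + w - y)) \<le> norm (y + w - y) * (C r * norm w)"
    proof (rule differentiable_bound_linearization[where S = S and f' = "\<lambda>x. blinfun_apply (D x)"])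
      show "y + t *\<^sub>R (y + w - y) \<in> S" if "t \<in> {0..1}" for t
        unfolding S_def in_segment using that by (intro exI[of _ t]) (auto simp: algebra_simps)
      show "(u has_derivative blinfun_apply (D x)) (at x within S)" for x
        by (rule has_derivative_at_withinI[OF D])
      show "y \<in> S" unfolding S_def by simp
      show "onorm (blinfun_apply (D x) - blinfun_apply (D y)) \<le> C r * norm w" if "x \<in> S" for x
      proof (rule onorm_le)
        fix v
        have xy: "norm (x - y) \<le> norm w" using segment_bound1[of x y "y + w"] that unfolding S_def by simp
        have "norm ((blinfun_apply (D x) - blinfun_apply (D y)) v) = norm (D x v - D y v)" by simp
        also have "\<dots> \<le> C r * norm (x - y) * norm v"
          using Ssub that \<open>y \<in> cball 0 r\<close> by (intro Dlip) auto
        also have "\<dots> \<le> C r * norm w * norm v"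
          using xy C0 by (intro mult_right_mono mult_left_mono) auto
        finally show "norm ((blinfun_apply (D x) - blinfun_apply (D y)) v) \<le> C r * norm w * norm v" .
      qed
    qed
    then show ?thesis by simp
  qed
  have avgG: "avgp (\<lambda>t. G (\<lambda>j. \<psi> j a t) v) T = G (\<lambda>j. avgp (\<psi> j a) T) v" for a v T
  proof -
    have "avgp (\<lambda>t. G (\<lambda>j. \<psi> j a t) v) T = (\<Sum>j\<in>UNIV. avgp (\<lambda>t. of_real (2 * Re (cnj (v $ j) * \<psi> j a t))) T)"
      unfolding G_sum
    proof (rule avgp_sum)
      show "finite (UNIV::'n set)" by simp
      fix i c d
      show "(\<lambda>t. complex_of_real (2 * Re (cnj (v $ i) * \<psi> i a t))) integrable_on {c..d}"
        by (rule integrable_linear[OF int\<psi> bl_aux, unfolded o_def])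
    qed
    also have "\<dots> = G (\<lambda>j. avgp (\<psi> j a) T) v"
      unfolding G_sum by (intro sum.cong refl avgp_linear[OF bl_aux int\<psi>])
    finally show ?thesis .
  qed
  have cG: "continuous_on S (\<lambda>t. G (\<lambda>j. \<psi> j a t) v)" for S a v
    unfolding G_def by (intro continuous_intros c\<psi>)
  have est: "norm (Lu (a + v) - Lu a - G (\<lambda>j. M j a) v) \<le> norm v * (C (norm a + 1) * norm v)"
    if "norm v \<le> 1" for a v
  proof -
    define r where "r = norm a + 1"
    define F where "F t = u (R t (a + v)) - u (R t a) - G (\<lambda>j. \<psi> j a t) v" for t
    have cF: "continuous_on UNIV F" unfolding F_def by (intro continuous_intros cuR cG)
    have Fb: "norm (F t - 0) \<le> norm v * (C r * norm v)" for t
    proof -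
      have "G (\<lambda>j. \<psi> j a t) v = D (R t a) (R t v)"
        unfolding DG \<psi>_def R_def G_flow ..
      then have feq: "F t = u (R t a + R t v) - u (R t a) - D (R t a) (R t v)"
        unfolding F_def Radd by simp
      have m1: "R t a \<in> cball 0 r" unfolding r_def by simp
      have m2: "R t a + R t v \<in> cball 0 r"
        unfolding Radd[symmetric] r_def using norm_triangle_ineq[of a v] that by simp
      have "norm (F t) \<le> norm (R t v) * (C r * norm (R t v))" unfolding feq by (rule tay[OF m1 m2])
      then show ?thesis by simp
    qed
    have "((\<lambda>T. avgp F T) \<longlongrightarrow> Lu (a + v) - Lu a - G (\<lambda>j. M j a) v) at_top"
    proof -
      have eq: "avgp F T = avgp (\<lambda>t. u (R t (a + v))) T - avgp (\<lambda>t. u (R t a)) T - G (\<lambda>j. avgp (\<psi> j a) T) v" for T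
      proof -
        have i1: "(\<lambda>t. u (R t (a + v)) - u (R t a)) integrable_on {c..d}" for c d
          by (intro integrable_diff intu)
        have i2: "(\<lambda>t. G (\<lambda>j. \<psi> j a t) v) integrable_on {c..d}" for c d
          by (rule integrable_continuous_real[OF cG])
        show ?thesis
          unfolding F_def avgG[symmetric] avgp_diff[OF i1 i2] avgp_diff[OF intu intu] ..
      qed
      have gl: "((\<lambda>T. G (\<lambda>j. avgp (\<psi> j a) T) v) \<longlongrightarrow> G (\<lambda>j. M j a) v) at_top"
        unfolding G_def using M unfolding time_avg_iff by (intro tendsto_intros) auto
      show ?thesis unfolding eq using Lu[of "a + v"] Lu[of a] gl unfolding time_avg_iff
        by (intro tendsto_diff) auto
    qed
    moreover have "\<forall>\<^sub>F T in at_top. norm (avgp F T) \<le> norm v * (C r * norm v)"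
      using eventually_gt_at_top[of "0::real"]
    proof eventually_elim
      case (elim T)
      from avg_close(1)[OF cF continuous_on_const Fb elim] show ?case by simp
    qed
    ultimately show ?thesis unfolding r_def by (intro Lim_norm_ubound) auto
  qed
  have hasD: "(Lu has_derivative G (\<lambda>j. M j a)) (at a)" for a
    unfolding has_derivative_at_alt
  proof (intro conjI allI impI G_bl)
    fix e :: real assume e: "e > 0"
    define K where "K = C (norm a + 1)"
    have K0: "0 \<le> K" unfolding K_def by (rule C0)
    show "\<exists>d>0. \<forall>y. norm (y - a) < d \<longrightarrow> norm (Lu y - Lu a - G (\<lambda>j. M j a) (y - a)) \<le> e * norm (y - a)"
    proof (intro exI[of _ "min 1 (e / (K + 1))"] conjI allI impI)
      show "0 < min 1 (e / (K + 1))" using e K0 by simp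
      fix y assume y: "norm (y - a) < min 1 (e / (K + 1))"
      have "norm (Lu y - Lu a - G (\<lambda>j. M j a) (y - a)) \<le> norm (y - a) * (K * norm (y - a))"
        using est[of "y - a" a] y unfolding K_def by simp
      also have "\<dots> \<le> norm (y - a) * e"
      proof (rule mult_left_mono)
        have "K * norm (y - a) \<le> K * (e / (K + 1))" using y K0 by (intro mult_left_mono) auto
        also have "\<dots> \<le> e" using K0 e by (simp add: field_simps)
        finally show "K * norm (y - a) \<le> e" .
      qed simp
      finally show "norm (Lu y - Lu a - G (\<lambda>j. M j a) (y - a)) \<le> e * norm (y - a)"
        by (simp add: mult.commute)
    qed
  qed
  have Mlip: "(Lz r j)-lipschitz_on (cball 0 r) (M j)" for r j
  proof (rule lipschitz_onI[OF _ Lz0])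
    fix x y assume x: "x \<in> cball (0::complex^'n) r" and y: "y \<in> cball (0::complex^'n) r"
    have pw: "norm (\<psi> j x t - \<psi> j y t) \<le> Lz r j * norm (x - y)" for t
    proof -
      have "norm (\<psi> j x t - \<psi> j y t) = norm (dzbar u j (R t x) - dzbar u j (R t y))"
        unfolding \<psi>_def by (simp add: right_diff_distrib[symmetric] norm_mult)
      also have "\<dots> \<le> Lz r j * norm (R t x - R t y)"
        using x y by (intro lipschitz_on_normD[OF Lz]) auto
      also have "\<dots> = Lz r j * norm (x - y)" unfolding Rdiff by simp
      finally show ?thesis .
    qed
    have "((\<lambda>T. avgp (\<psi> j x) T - avgp (\<psi> j y) T) \<longlongrightarrow> M j x - M j y) at_top"
      using M[of j x] M[of j y] unfolding time_avg_iff by (intro tendsto_diff) auto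
    moreover have "\<forall>\<^sub>F T in at_top. norm (avgp (\<psi> j x) T - avgp (\<psi> j y) T) \<le> Lz r j * norm (x - y)"
      using eventually_gt_at_top[of "0::real"]
      by eventually_elim (rule avg_close(1)[OF c\<psi> c\<psi> pw])
    ultimately have "norm (M j x - M j y) \<le> Lz r j * norm (x - y)"
      by (intro Lim_norm_ubound) auto
    then show "dist (M j x) (M j y) \<le> Lz r j * dist x y" by (simp add: dist_norm)
  qed
  define D' where "D' a = Blinfun (G (\<lambda>j. M j a))" for a
  have D'app: "blinfun_apply (D' a) = G (\<lambda>j. M j a)" for a
    unfolding D'_def by (rule bounded_linear_Blinfun_apply[OF G_bl])
  have D'lip: "(C r)-lipschitz_on (cball 0 r) D'" for r
  proof (rule lipschitz_onI[OF _ C0])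
    fix x y assume x: "x \<in> cball (0::complex^'n) r" and y: "y \<in> cball (0::complex^'n) r"
    have "norm (D' x - D' y) \<le> C r * norm (x - y)"
    proof (rule norm_blinfun_bound)
      show "0 \<le> C r * norm (x - y)" using C0 by simp
      fix v
      have "norm (blinfun_apply (D' x - D' y) v) = norm (G (\<lambda>j. M j x - M j y) v)"
        by (simp add: blinfun.diff_left D'app G_diff)
      also have "\<dots> \<le> (\<Sum>j\<in>UNIV. 2 * norm (M j x - M j y)) * norm v" by (rule G_norm)
      also have "\<dots> \<le> (\<Sum>j\<in>UNIV. 2 * (Lz r j * norm (x - y))) * norm v"
        by (intro mult_right_mono sum_mono mult_left_mono lipschitz_on_normD[OF Mlip] x y) auto
      also have "\<dots> = C r * norm (x - y) * norm v"
        unfolding C_def sum_distrib_right by (simp add: mult.assoc)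
      finally show "norm (blinfun_apply (D' x - D' y) v) \<le> C r * norm (x - y) * norm v" .
    qed
    then show "dist (D' x) (D' y) \<le> C r * dist x y" by (simp add: dist_norm)
  qed
  have fdL: "frechet_derivative Lu (at a) = G (\<lambda>j. M j a)" for a
    using frechet_derivative_at[OF hasD] by simp
  have dzbL: "dzbar Lu j a = M j a" for j a
    unfolding dzbar_def dx_def dy_def fdL G_axis1 G_axisi by (simp add: complex_eq_iff)
  have dzL: "dz Lu j a = cnj (M j a)" for j a
    unfolding dz_def dx_def dy_def fdL G_axis1 G_axisi by (simp add: complex_eq_iff)
  have C11: "C11loc Lu"
    unfolding C11loc_def C1_def
  proof (intro conjI allI exI[of _ D'])
    show "(Lu has_derivative blinfun_apply (D' a)) (at a)" for a unfolding D'app by (rule hasD)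
    show "continuous_on UNIV D'" using D'lip by (intro cont_of_cball) blast
    fix j
    show "locally_lipschitz (dzbar Lu j)"
      unfolding dzbL[abs_def] using Mlip by (intro loclip_of_cball) blast
    have dcnj: "dist (cnj p) (cnj q) = dist p q" for p q :: complex
      unfolding dist_norm complex_cnj_diff[symmetric] complex_mod_cnj ..
    have "(Lz r j)-lipschitz_on (cball 0 r) (\<lambda>a. cnj (M j a))" for r
    proof (rule lipschitz_onI[OF _ Lz0])
      fix x y assume "x \<in> cball (0::complex^'n) r" "y \<in> cball (0::complex^'n) r"
      then have "dist (M j x) (M j y) \<le> Lz r j * dist x y" by (rule lipschitz_onD[OF Mlip])
      then show "dist (cnj (M j x)) (cnj (M j y)) \<le> Lz r j * dist x y"
        using dcnj by simp
    qed
    then show "locally_lipschitz (dz Lu j)"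
      unfolding dzL[abs_def] by (intro loclip_of_cball) blast
  qed
  have vec: "time_avg (\<lambda>t. Phi (t *\<^sub>R \<Lambda>) (P (R t a))) (\<chi> j. 2 * \<i> * M j a)" for a
  proof -
    have eqv: "Phi (t *\<^sub>R \<Lambda>) (P (R t a)) = (\<chi> j. 2 * \<i> * \<psi> j a t)" for t
      unfolding vec_eq_iff Phi_pos_nth using assms(3) by (simp add: \<psi>_def u_def)
    have cV: "continuous_on S (\<lambda>t. \<chi> j. 2 * \<i> * \<psi> j a t)" for S
      by (intro continuous_intros c\<psi>)
    have intV: "(\<lambda>t. \<chi> j. 2 * \<i> * \<psi> j a t) integrable_on {c..d}" for c d
      by (rule integrable_continuous_real[OF cV])
    have cp: "avgp (\<lambda>t. \<chi> j. 2 * \<i> * \<psi> j a t) T $ j = 2 * \<i> * avgp (\<psi> j a) T" for T j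
      using avgp_linear[OF bounded_linear_vec_nth intV, of j T] avgp_linear[OF bounded_linear_mult_right int\<psi>, of "2 * \<i>" j a T]
      by simp
    have cm: "avgm (\<lambda>t. \<chi> j. 2 * \<i> * \<psi> j a t) T $ j = 2 * \<i> * avgm (\<psi> j a) T" for T j
      using avgm_linear[OF bounded_linear_vec_nth intV, of j T] avgm_linear[OF bounded_linear_mult_right int\<psi>, of "2 * \<i>" j a T]
      by simp
    show ?thesis unfolding eqv time_avg_iff
    proof (intro conjI vec_tendstoI)
      fix j
      show "((\<lambda>T. avgp (\<lambda>t. \<chi> j. 2 * \<i> * \<psi> j a t) T $ j) \<longlongrightarrow> (\<chi> j. 2 * \<i> * M j a) $ j) at_top"
        unfolding cp using M[of j a] unfolding time_avg_iff by (auto intro!: tendsto_mult_left)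
      show "((\<lambda>T. avgm (\<lambda>t. \<chi> j. 2 * \<i> * \<psi> j a t) T $ j) \<longlongrightarrow> (\<chi> j. 2 * \<i> * M j a) $ j) at_bot"
        unfolding cm using M[of j a] unfolding time_avg_iff by (auto intro!: tendsto_mult_left)
    qed
  qed
  show ?thesis
  proof (intro exI[of _ "\<lambda>a. Re (Lu a)"] conjI allI)
    show "time_avg (\<lambda>t. h (Phi (- (t *\<^sub>R \<Lambda>)) a)) (Re (Lu a))" for a
      using hav[of a] unfolding R_def .
    show "C11loc (\<lambda>z. complex_of_real (Re (Lu z)))" unfolding Lufun by (rule C11)
    show "time_avg (\<lambda>t. Phi (t *\<^sub>R \<Lambda>) (P (Phi (- (t *\<^sub>R \<Lambda>)) a)))
            (\<chi> j. 2 * \<i> * dzbar (\<lambda>z. complex_of_real (Re (Lu z))) j a)" for a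
      using vec[of a] unfolding Lufun dzbL R_def .
  qed
qed

end
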